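(* Let $\Delta^+=\{\zeta\in\mathbb{C}: |\zeta|<1,\ \operatorname{Im}\zeta>0\}$ be the upper half disc and let $\gamma=(-1,1)$, viewed as an interval of the real axis in $\mathbb{C}$. Let $F$ be holomorphic on $\Delta^+$ with a continuous extension to $\Delta^+\cup\gamma$, such that $F$ maps $\gamma$ into $\{z\in\mathbb{C}: |\operatorname{Im} z|\leq C|\operatorname{Re} z|\}$ for some constant $C>0$. Suppose $F$ vanishes to infinite order at $0$, i.e. for every $k\in\mathbb{N}$, $F(\zeta)=O(|\zeta|^k)$ as $\zeta\to 0$ with $\zeta\in\Delta^+$. Then either $F\equiv 0$, or there is a sequence $(p_j)$ in $\Delta^+$ with $p_j\to 0$ and $\operatorname{Re}F(p_j)\neq 0$ for all $j$, such that $\operatorname{Im}F(p_j)/\operatorname{Re}F(p_j)$ is unbounded. *)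

theory Defs
  imports "HOL-Analysis.Analysis"
begin

definition upper_half_disc :: "complex set" where
  "upper_half_disc = {z. norm z < 1 \<and> Im z > 0}"

definition gamma_interval :: "complex set" where
  "gamma_interval = {z. Im z = 0 \<and> -1 < Re z \<and> Re z < 1}"

end

theory Submission
  imports Defs "HOL-Complex_Analysis.Complex_Analysis"
begin

lemma norm_sub_lt_add_cnj:
  fixes x a :: complex
  assumes "Re x > 0" "Re a > 0"
  shows "norm (x - a) < norm (x + cnj a)"
proof -
  have "(Re x - Re a)^2 < (Re x + Re a)^2" using assms by (simp add: power2_eq_square algebra_simps)
  then have "(Re x - Re a)^2 + (Im x - Im a)^2 < (Re x + Re a)^2 + (Im x - Im a)^2" by simp
  then show ?thesis by (simp add: cmod_def)
qed

lemma harnack_step: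
  fixes G :: "complex \<Rightarrow> complex"
  assumes holo: "G holomorphic_on ball c R" and R: "R > 0"
    and pos: "\<And>z. z \<in> ball c R \<Longrightarrow> Re (G z) > 0"
    and w: "norm (w - c) \<le> R/2"
  shows "norm (G c) \<le> 3 * norm (G w)"
proof -
  define a where "a = G c"
  have apos: "Re a > 0" using pos[of c] R by (simp add: a_def)
  define h where "h = (\<lambda>z. c + of_real R * z)"
  have hin: "h z \<in> ball c R" if "norm z < 1" for z
    using that R by (simp add: h_def dist_norm norm_mult)
  define \<phi> where "\<phi> = (\<lambda>z. (G (h z) - a) / (G (h z) + cnj a))"
  have den: "G (h z) + cnj a \<noteq> 0" if "norm z < 1" for z
  proof
    assume "G (h z) + cnj a = 0"
    then have "Re (G (h z) + cnj a) = 0" by simp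
    with pos[OF hin[OF that]] apos show False by simp
  qed
  have holh: "h holomorphic_on ball 0 1" unfolding h_def by (intro holomorphic_intros)
  have "(G \<circ> h) holomorphic_on ball 0 1"
    by (rule holomorphic_on_compose[OF holh holomorphic_on_subset[OF holo]]) (auto intro: hin)
  then have holGh: "(\<lambda>z. G (h z)) holomorphic_on ball 0 1" by (simp add: o_def)
  have hol: "\<phi> holomorphic_on ball 0 1"
    unfolding \<phi>_def using den by (intro holomorphic_intros holGh) auto
  have phi0: "\<phi> 0 = 0" by (simp add: \<phi>_def h_def a_def)
  have phi_lt: "norm (\<phi> z) < 1" if "norm z < 1" for z
  proof -
    have "norm (G (h z) - a) < norm (G (h z) + cnj a)"
      by (rule norm_sub_lt_add_cnj[OF pos[OF hin[OF that]] apos])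
    then show ?thesis using den[OF that] by (simp add: \<phi>_def norm_divide divide_less_eq)
  qed
  define \<xi> where "\<xi> = (w - c) / of_real R"
  have hxi: "h \<xi> = w" using R by (simp add: h_def \<xi>_def)
  have nxi: "norm \<xi> \<le> 1/2" using w R by (simp add: \<xi>_def norm_divide divide_le_eq)
  then have "norm \<xi> < 1" by simp
  from Schwarz_Lemma(1)[OF hol phi0 phi_lt this] nxi
  have pl: "norm (\<phi> \<xi>) \<le> 1/2" by linarith
  define x where "x = G w"
  define p where "p = \<phi> \<xi>"
  have dx: "x + cnj a \<noteq> 0" using den[OF \<open>norm \<xi> < 1\<close>] hxi by (simp add: x_def)
  have pe: "p = (x - a) / (x + cnj a)" using hxi by (simp add: p_def \<phi>_def x_def)
  then have "x * (1 - p) = a + p * cnj a" using dx by (simp add: field_simps)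
  have "norm a / 2 \<le> norm a - norm p * norm a"
  proof -
    have "norm p * norm a \<le> (1/2) * norm a" using pl by (intro mult_right_mono) (auto simp: p_def)
    then show ?thesis by linarith
  qed
  also have "norm a - norm p * norm a \<le> norm (a + p * cnj a)"
    by (metis norm_diff_ineq norm_minus_cancel norm_mult complex_mod_cnj diff_minus_eq_add)
  also have "\<dots> = norm x * norm (1 - p)" using \<open>x * (1 - p) = a + p * cnj a\<close> by (metis norm_mult)
  also have "\<dots> \<le> norm x * (3/2)"
  proof (rule mult_left_mono)
    have "norm (1 - p) \<le> 1 + norm p" by (metis norm_diff_ineq norm_one norm_triangle_ineq4)
    then show "norm (1 - p) \<le> 3/2" using pl by (simp add: p_def)
  qed simp
  finally show ?thesis by (simp add: a_def x_def)
qed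


theorem mainTheorem1:
  fixes F :: "complex \<Rightarrow> complex" and C :: real
  assumes holo: "F holomorphic_on upper_half_disc"
    and cont: "continuous_on (upper_half_disc \<union> gamma_interval) F"
    and Cpos: "C > 0"
    and cone: "\<forall>z\<in>gamma_interval. \<bar>Im (F z)\<bar> \<le> C * \<bar>Re (F z)\<bar>"
    and flat: "\<forall>k::nat. \<exists>M. eventually (\<lambda>z. norm (F z) \<le> M * norm z ^ k) (at 0 within upper_half_disc)"
  shows "(\<forall>z\<in>upper_half_disc. F z = 0) \<or>
         (\<exists>p :: nat \<Rightarrow> complex. (\<forall>j. p j \<in> upper_half_disc \<and> Re (F (p j)) \<noteq> 0) \<and>
            p \<longlonglongrightarrow> 0 \<and>
            \<not> (\<exists>B. \<forall>j. \<bar>Im (F (p j)) / Re (F (p j))\<bar> \<le> B))"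
proof (rule ccontr)
  define D where "D = upper_half_disc"
  assume "\<not> ?thesis"
  then have nz: "\<not> (\<forall>z\<in>D. F z = 0)"
    and nseq: "\<not> (\<exists>p :: nat \<Rightarrow> complex. (\<forall>j. p j \<in> D \<and> Re (F (p j)) \<noteq> 0) \<and>
            p \<longlonglongrightarrow> 0 \<and> \<not> (\<exists>B. \<forall>j. \<bar>Im (F (p j)) / Re (F (p j))\<bar> \<le> B))"
    by (auto simp: D_def)
  have Deq: "D = ball 0 1 \<inter> {z. Im z > 0}" by (auto simp: D_def upper_half_disc_def)
  have openD: "open D" unfolding Deq by (intro open_Int open_ball open_halfspace_Im_gt)
  have convD: "convex D" unfolding Deq by (intro convex_Int convex_ball convex_halfspace_Im_gt)
  have connD: "connected D" by (rule convex_connected[OF convD])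
  have holoD: "F holomorphic_on D" using holo by (simp add: D_def)
  obtain \<delta> B where dpos: "\<delta> > 0"
    and rat: "\<And>z. z \<in> D \<Longrightarrow> norm z < \<delta> \<Longrightarrow> Re (F z) \<noteq> 0 \<Longrightarrow> \<bar>Im (F z) / Re (F z)\<bar> \<le> B"
  proof -
    have "\<exists>\<delta>>0. \<exists>B. \<forall>z. z \<in> D \<longrightarrow> norm z < \<delta> \<longrightarrow> Re (F z) \<noteq> 0 \<longrightarrow> \<bar>Im (F z) / Re (F z)\<bar> \<le> B"
    proof (rule ccontr)
      assume H: "\<not> ?thesis"
      have "\<forall>n::nat. \<exists>z. z \<in> D \<and> norm z < 1 / real (Suc n) \<and> Re (F z) \<noteq> 0 \<and> \<bar>Im (F z) / Re (F z)\<bar> > real n"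
      proof
        fix n :: nat
        have "\<not> (\<forall>z. z \<in> D \<longrightarrow> norm z < 1 / real (Suc n) \<longrightarrow> Re (F z) \<noteq> 0 \<longrightarrow> \<bar>Im (F z) / Re (F z)\<bar> \<le> real n)"
          using H by (metis of_nat_0_less_iff zero_less_Suc zero_less_divide_1_iff)
        then show "\<exists>z. z \<in> D \<and> norm z < 1 / real (Suc n) \<and> Re (F z) \<noteq> 0 \<and> \<bar>Im (F z) / Re (F z)\<bar> > real n"
          by (auto simp: not_le)
      qed
      then obtain p where p: "\<And>n. p n \<in> D \<and> norm (p n) < 1 / real (Suc n) \<and> Re (F (p n)) \<noteq> 0 \<and> \<bar>Im (F (p n)) / Re (F (p n))\<bar> > real n"
        by metis
      have "p \<longlonglongrightarrow> 0" by (rule LIMSEQ_norm_0) (use p in blast)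
      moreover have "\<not> (\<exists>B. \<forall>j. \<bar>Im (F (p j)) / Re (F (p j))\<bar> \<le> B)"
      proof
        assume "\<exists>B. \<forall>j. \<bar>Im (F (p j)) / Re (F (p j))\<bar> \<le> B"
        then obtain B where B: "\<And>j. \<bar>Im (F (p j)) / Re (F (p j))\<bar> \<le> B" by blast
        obtain j :: nat where "B < real j" using reals_Archimedean2 by blast
        with B[of j] p[of j] show False by linarith
      qed
      ultimately show False using nseq p by blast
    qed
    then show ?thesis using that by blast
  qed
  have lim0: "(F \<longlongrightarrow> 0) (at 0 within D)"
  proof -
    obtain M where M: "eventually (\<lambda>z. norm (F z) \<le> M * norm z ^ 1) (at 0 within D)"
      using flat unfolding D_def by blast
    have "((\<lambda>z. M * norm z ^ 1) \<longlongrightarrow> M * norm (0::complex) ^ 1) (at 0 within D)"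
      by (intro tendsto_intros)
    then have "((\<lambda>z. M * norm z ^ 1) \<longlongrightarrow> 0) (at 0 within D)" by simp
    then show ?thesis by (rule Lim_null_comparison[OF M])
  qed
  have lp: "0 islimpt D"
  proof (rule islimpt_approachable[THEN iffD2], intro allI impI)
    fix e :: real assume e: "e > 0"
    define x where "x = \<i> * of_real (min e 1 / 2)"
    have "x \<in> D" using e by (auto simp: Deq x_def norm_mult)
    moreover have "x \<noteq> 0" using e by (simp add: x_def)
    moreover have "dist x 0 < e" using e by (simp add: x_def norm_mult)
    ultimately show "\<exists>x'\<in>D. x' \<noteq> 0 \<and> dist x' 0 < e" by blast
  qed
  have ntriv: "\<not> trivial_limit (at 0 within D)" using lp by (simp add: trivial_limit_within)
  have ncst: "\<not> F constant_on D"
  proof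
    assume "F constant_on D"
    then obtain c where c: "\<And>z. z \<in> D \<Longrightarrow> F z = c" by (auto simp: constant_on_def)
    have ev: "eventually (\<lambda>z. F z = c) (at 0 within D)"
      by (auto simp: eventually_at_filter c)
    have "(F \<longlongrightarrow> c) (at 0 within D)"
      by (rule tendsto_eventually) (rule ev)
    with lim0 ntriv have "c = 0" using tendsto_unique by blast
    then show False using nz c by blast
  qed
  define \<rho> where "\<rho> = min \<delta> 1"
  have rpos: "\<rho> > 0" using dpos by (simp add: \<rho>_def)
  define U where "U = ball 0 \<rho> \<inter> {z. Im z > 0}"
  have UD: "U \<subseteq> D" by (auto simp: U_def Deq \<rho>_def)
  have Ud: "\<And>z. z \<in> U \<Longrightarrow> norm z < \<delta>" by (auto simp: U_def \<rho>_def)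
  have openU: "open U" unfolding U_def by (intro open_Int open_ball open_halfspace_Im_gt)
  have connU: "connected U" unfolding U_def
    by (intro convex_connected convex_Int convex_ball convex_halfspace_Im_gt)
  have reNZ: "Re (F z) \<noteq> 0" if zU: "z \<in> U" for z
  proof
    assume re0: "Re (F z) = 0"
    obtain r where r: "r > 0" "ball z r \<subseteq> U" using openU zU openE by blast
    have "open (F ` ball z r)"
      by (rule open_mapping_thm[OF holoD openD connD open_ball _ ncst]) (use r UD in blast)
    moreover have "F z \<in> F ` ball z r" using r by simp
    ultimately obtain \<epsilon> where eps: "\<epsilon> > 0" "ball (F z) \<epsilon> \<subseteq> F ` ball z r"
      using openE by blast
    define \<sigma> :: real where "\<sigma> = (if Im (F z) \<ge> 0 then 1 else -1)"
    define t where "t = \<epsilon> / (2 * (\<bar>B\<bar> + 2))"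
    have tpos: "t > 0" using eps by (simp add: t_def)
    define w where "w = F z + Complex t (t * (\<bar>B\<bar> + 1) * \<sigma>)"
    have "norm (Complex t (t * (\<bar>B\<bar> + 1) * \<sigma>)) \<le> t + t * (\<bar>B\<bar> + 1)"
    proof -
      have sig1: "\<bar>\<sigma>\<bar> = 1" by (simp add: \<sigma>_def)
      have "\<bar>t * (\<bar>B\<bar> + 1) * \<sigma>\<bar> = t * (\<bar>B\<bar> + 1)" using tpos sig1 by (simp add: abs_mult)
      then show ?thesis using cmod_le[of "Complex t (t * (\<bar>B\<bar> + 1) * \<sigma>)"] tpos by simp
    qed
    also have "\<dots> = \<epsilon> / 2"
    proof -
      have "t + t * (\<bar>B\<bar> + 1) = t * (\<bar>B\<bar> + 2)" by (simp add: algebra_simps)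
      also have "\<dots> = \<epsilon> / 2"
      proof -
        have bp: "\<bar>B\<bar> + 2 \<noteq> 0" using abs_ge_zero[of B] by linarith
        have gen: "\<And>k e::real. k \<noteq> 0 \<Longrightarrow> e / (2 * k) * k = e / 2" by (simp add: field_simps)
        show ?thesis unfolding t_def by (rule gen[OF bp])
      qed
      finally show ?thesis .
    qed
    finally have "dist w (F z) < \<epsilon>" using eps by (simp add: w_def dist_norm)
    then have "w \<in> F ` ball z r" using eps by (auto simp: dist_commute)
    then obtain z' where z': "z' \<in> ball z r" "F z' = w" by blast
    have z'U: "z' \<in> U" using z' r by blast
    have reW: "Re w = t" using re0 by (simp add: w_def)
    have imW: "\<bar>Im w\<bar> \<ge> t * (\<bar>B\<bar> + 1)"
      using tpos by (auto simp: w_def \<sigma>_def)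
    have "\<bar>Im (F z') / Re (F z')\<bar> \<le> B"
      using rat[of z'] z'U UD Ud[OF z'U] z'(2) reW tpos by auto
    then have "\<bar>Im w / t\<bar> \<le> B" unfolding z'(2) reW .
    then have "\<bar>Im w\<bar> / t \<le> B" using tpos by (simp only: abs_divide abs_of_pos)
    then have "\<bar>Im w\<bar> \<le> B * t" using tpos by (simp only: pos_divide_le_eq)
    moreover have "B * t \<le> \<bar>B\<bar> * t" using tpos by (intro mult_right_mono) auto
    moreover have "t * (\<bar>B\<bar> + 1) = \<bar>B\<bar> * t + t" by (simp add: algebra_simps)
    ultimately show False using imW tpos by linarith
  qed
  define G where "G = (if \<exists>z\<in>U. Re (F z) > 0 then F else (\<lambda>z. - F z))"
  have Gpos: "Re (G z) > 0" if "z \<in> U" for z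
  proof (cases "\<exists>z\<in>U. Re (F z) > 0")
    case True
    then obtain z0 where z0: "z0 \<in> U" "Re (F z0) > 0" by blast
    have contU: "continuous_on U (\<lambda>z. Re (F z))"
      by (intro continuous_intros holomorphic_on_imp_continuous_on holomorphic_on_subset[OF holoD UD])
    have "connected ((\<lambda>z. Re (F z)) ` U)" by (rule connected_continuous_image[OF contU connU])
    then have iv: "\<And>a b x. a \<in> (\<lambda>z. Re (F z)) ` U \<Longrightarrow> b \<in> (\<lambda>z. Re (F z)) ` U \<Longrightarrow> a \<le> x \<Longrightarrow> x \<le> b \<Longrightarrow> x \<in> (\<lambda>z. Re (F z)) ` U"
      unfolding connected_iff_interval by blast
    have "Re (F z) > 0"
    proof (rule ccontr)
      assume "\<not> Re (F z) > 0"
      then have "Re (F z) \<le> 0" by simp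
      from iv[of "Re (F z)" "Re (F z0)" 0] this z0 that
      have "0 \<in> (\<lambda>z. Re (F z)) ` U" by auto
      then show False using reNZ by auto
    qed
    then show ?thesis using True by (simp add: G_def)
  next
    case False
    then show ?thesis using reNZ[OF that] that by (force simp: G_def)
  qed
  have holG: "G holomorphic_on U"
    unfolding G_def using holomorphic_on_subset[OF holoD UD]
    by (auto intro: holomorphic_intros)
  have normG: "norm (G z) = norm (F z)" for z by (simp add: G_def)
  define s0 where "s0 = \<rho> / 2"
  have s0pos: "s0 > 0" using rpos by (simp add: s0_def)
  define c where "c = (\<lambda>n::nat. \<i> * of_real (s0 / 2 ^ n))"
  have ballU: "ball (c n) (s0 / 2 ^ n) \<subseteq> U" for n
  proof
    fix z assume z: "z \<in> ball (c n) (s0 / 2 ^ n)"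
    define s where "s = s0 / 2 ^ n"
    have s: "s > 0" "s \<le> s0" using s0pos by (auto simp: s_def divide_le_eq)
    have d: "norm (c n - z) < s" using z by (simp add: dist_norm s_def)
    have "\<bar>Im (c n - z)\<bar> < s" using d abs_Im_le_cmod[of "c n - z"] by linarith
    then have "Im z > 0" by (simp add: c_def s_def[symmetric])
    moreover have "norm z < \<rho>"
    proof -
      have "norm z \<le> norm (c n) + norm (c n - z)" by (metis norm_triangle_sub norm_minus_commute)
      also have "norm (c n) = s"
      proof -
        have "c n = \<i> * of_real s" by (simp add: c_def s_def)
        then show ?thesis using s by (simp add: norm_mult)
      qed
      finally show ?thesis using d s by (simp add: s0_def)
    qed
    ultimately show "z \<in> U" by (simp add: U_def)
  qed
  have step: "norm (G (c n)) \<le> 3 * norm (G (c (Suc n)))" for n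
  proof (rule harnack_step[where G=G and c="c n" and w="c (Suc n)" and R="s0 / 2 ^ n"])
    show "G holomorphic_on ball (c n) (s0 / 2 ^ n)" using holomorphic_on_subset[OF holG ballU[of n]] .
    show "s0 / 2 ^ n > 0" using s0pos by simp
    show "\<And>z. z \<in> ball (c n) (s0 / 2 ^ n) \<Longrightarrow> Re (G z) > 0" using Gpos ballU[of n] by blast
    have "c (Suc n) - c n = - (\<i> * of_real (s0 / 2 ^ Suc n))" by (simp add: c_def field_simps)
    then have "norm (c (Suc n) - c n) = \<bar>s0 / 2 ^ Suc n\<bar>"
      by (simp only: norm_minus_cancel norm_mult norm_ii norm_of_real mult_1)
    then show "norm (c (Suc n) - c n) \<le> s0 / 2 ^ n / 2" using s0pos by simp
  qed
  have chain: "norm (G (c 0)) \<le> 3 ^ n * norm (G (c n))" for n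
  proof (induction n)
    case (Suc n)
    have h1: "3 ^ n * norm (G (c n)) \<le> 3 ^ n * (3 * norm (G (c (Suc n))))"
      by (intro mult_left_mono step) simp
    have h2: "(3::real) ^ n * (3 * norm (G (c (Suc n)))) = 3 ^ Suc n * norm (G (c (Suc n)))"
      by simp
    show ?case using Suc h1 h2 by linarith
  qed simp
  obtain M where M: "eventually (\<lambda>z. norm (F z) \<le> M * norm z ^ 2) (at 0 within D)"
    using flat unfolding D_def by blast
  then obtain d where d: "d > 0" "\<And>z. z \<in> D \<Longrightarrow> z \<noteq> 0 \<Longrightarrow> dist z 0 < d \<Longrightarrow> norm (F z) \<le> M * norm z ^ 2"
    unfolding eventually_at by blast
  define A where "A = norm (G (c 0))"
  have "c 0 \<in> U" using ballU[of 0] s0pos by (auto simp: subset_iff)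
  then have Apos: "A > 0" using Gpos[of "c 0"] by (auto simp: A_def)
  define y where "y = min (d / s0) (A / (\<bar>M\<bar> * s0^2 + 1))"
  have Kpos: "\<bar>M\<bar> * s0^2 + 1 > 0" by (intro add_nonneg_pos mult_nonneg_nonneg) auto
  have ypos: "y > 0" using d s0pos Apos Kpos by (simp add: y_def)
  obtain n where n: "(3/4::real) ^ n < y" using real_arch_pow_inv[OF ypos] by force
  have h12: "(1/2::real) ^ n \<le> (3/4) ^ n" by (intro power_mono) auto
  have cn0: "norm (c n) = \<bar>s0 / 2 ^ n\<bar>"
    by (simp only: c_def norm_mult norm_ii norm_of_real mult_1)
  have cnorm: "norm (c n) = s0 * (1/2) ^ n" using s0pos cn0 by (simp add: power_one_over)
  have cU: "c n \<in> U" using ballU[of n] s0pos by (auto simp: subset_iff)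
  have "dist (c n) 0 < d"
  proof -
    have "s0 * (1/2) ^ n < s0 * (d / s0)" using n h12 s0pos by (intro mult_strict_left_mono) (auto simp: y_def)
    then show ?thesis using cnorm s0pos by simp
  qed
  moreover have "c n \<noteq> 0" using s0pos by (simp add: c_def)
  ultimately have Fb: "norm (F (c n)) \<le> M * (s0 * (1/2) ^ n) ^ 2"
    using d(2)[of "c n"] cU UD cnorm by auto
  have "A \<le> 3 ^ n * (M * (s0 * (1/2) ^ n) ^ 2)"
  proof -
    have "3 ^ n * norm (G (c n)) \<le> 3 ^ n * (M * (s0 * (1/2) ^ n) ^ 2)"
      using Fb normG[of "c n"] by (intro mult_left_mono) auto
    then show ?thesis using chain[of n] unfolding A_def by linarith
  qed
  also have "\<dots> = M * s0^2 * (3/4) ^ n"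
  proof -
    have e1: "((1/2::real) ^ n) ^ 2 = (1/4) ^ n"
    proof -
      have "((1/2::real) ^ n) ^ 2 = ((1/2) * (1/2)) ^ n" by (simp only: power2_eq_square power_mult_distrib)
      then show ?thesis by simp
    qed
    have e2: "(3::real) ^ n * (1/4) ^ n = (3/4) ^ n" by (simp add: power_mult_distrib[symmetric])
    have "3 ^ n * (M * (s0 * (1/2) ^ n) ^ 2) = M * s0^2 * (3 ^ n * ((1/2::real) ^ n) ^ 2)"
      by (simp add: power_mult_distrib algebra_simps)
    then show ?thesis using e1 e2 by simp
  qed
  also have "\<dots> \<le> (\<bar>M\<bar> * s0^2 + 1) * (3/4) ^ n"
  proof (intro mult_right_mono)
    have "M * s0^2 \<le> \<bar>M\<bar> * s0^2" by (intro mult_right_mono) auto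
    then show "M * s0^2 \<le> \<bar>M\<bar> * s0^2 + 1" by linarith
  qed simp
  also have "\<dots> < (\<bar>M\<bar> * s0^2 + 1) * (A / (\<bar>M\<bar> * s0^2 + 1))"
    using n Kpos by (intro mult_strict_left_mono) (auto simp: y_def)
  also have "\<dots> = A" using Kpos by simp
  finally show False by simp
qed

end
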